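(* Let $\mathcal{P}\subseteq\mathcal{S}\subseteq\mathcal{T}$ be group properties. If for every $G\in\mathcal{S}$ there exists $H\in\mathcal{P}$ such that the group $(\mathbb{N},G)$ embeds (as a group) into $(\mathbb{N},H)$, then $\mathcal{P}$ is dense in $\mathcal{S}$.
   Context: Let $\mathbb{N}^{\mathbb{N}\times\mathbb{N}}$ be the space of functions $\mathbb{N}\times\mathbb{N}\to\mathbb{N}$ with the product of discrete topologies. Let $\mathcal{A}=\{G\in\mathbb{N}^{\mathbb{N}\times\mathbb{N}}: G \text{ is an abelian group operation on } \mathbb{N} \text{ with identity element } 0\}$ and $\mathcal{T}=\{G\in\mathcal{A}: (\mathbb{N},G)\text{ is torsion-free}\}$, with the subspace topology. A set $\mathcal{P}\subseteq\mathcal{T}$ is a group property if it is isomorphism invariant: for any $G\in\mathcal{T}$, if $(\mathbb{N},G)$ is isomorphic to $(\mathbb{N},H)$ for some $H\in\mathcal{P}$, then $G\in\mathcal{P}$. *)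

theory Defs
  imports "HOL-Analysis.Analysis" "HOL-Algebra.Group"
begin

text \<open>The structure (N, G) for a binary operation G : N x N -> N, with identity 0.
  The ambient space nat \<times> nat \<Rightarrow> nat carries the product topology
  (Function_Topology) of the discrete topology on nat.\<close>

definition grp :: "(nat \<times> nat \<Rightarrow> nat) \<Rightarrow> nat monoid" where
  "grp G = \<lparr>carrier = UNIV, monoid.mult = (\<lambda>a b. G (a, b)), one = 0\<rparr>"

definition AbGrp :: "(nat \<times> nat \<Rightarrow> nat) set" where
  "AbGrp = {G. comm_group (grp G)}"

definition torsion_free :: "('a, 'b) monoid_scheme \<Rightarrow> bool" where
  "torsion_free M \<longleftrightarrow>
     (\<forall>x\<in>carrier M. \<forall>n::nat. n > 0 \<longrightarrow> x [^]\<^bsub>M\<^esub> n = \<one>\<^bsub>M\<^esub> \<longrightarrow> x = \<one>\<^bsub>M\<^esub>)"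

definition TF :: "(nat \<times> nat \<Rightarrow> nat) set" where
  "TF = {G \<in> AbGrp. torsion_free (grp G)}"

definition group_property :: "(nat \<times> nat \<Rightarrow> nat) set \<Rightarrow> bool" where
  "group_property P \<longleftrightarrow> P \<subseteq> TF \<and>
     (\<forall>G\<in>TF. \<forall>H\<in>P. grp G \<cong> grp H \<longrightarrow> G \<in> P)"

definition embeds :: "('a, 'c) monoid_scheme \<Rightarrow> ('b, 'd) monoid_scheme \<Rightarrow> bool" where
  "embeds M N \<longleftrightarrow> (\<exists>h. h \<in> hom M N \<and> inj_on h (carrier M))"

text \<open>P dense in S w.r.t. the subspace topology on S: every point of S lies in the
  closure of P (closure taken in the product space; closure in S is this intersected with S).\<close>

end

theory Submission
  imports Defs
begin

lemma extend_perm: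
  fixes h :: "nat \<Rightarrow> nat"
  assumes fin: "finite A" and inj: "inj_on h A"
  shows "\<exists>\<sigma>. bij \<sigma> \<and> (\<forall>x\<in>A. \<sigma> x = h x)"
proof -
  define B where "B = h ` A"
  have finB: "finite B" using fin B_def by simp
  have cAB: "card A = card B" using inj B_def card_image by metis
  have "card (B - A) = card (A - B)"
  proof -
    have "card (B - A) = card B - card (B \<inter> A)" using finB card_Diff_subset_Int by (simp add: Diff_Int2 card_Diff_subset_Int)
    moreover have "card (A - B) = card A - card (A \<inter> B)" using fin by (simp add: card_Diff_subset_Int)
    ultimately show ?thesis using cAB by (simp add: Int_commute)
  qed
  then obtain \<tau> where tau: "bij_betw \<tau> (B - A) (A - B)"
    using finite_same_card_bij finB fin by (meson finite_Diff)
  define \<sigma> where "\<sigma> x = (if x \<in> A then h x else if x \<in> B then \<tau> x else x)" for x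
  have hB: "x \<in> A \<Longrightarrow> h x \<in> B" for x using B_def by auto
  have tA: "x \<in> B - A \<Longrightarrow> \<tau> x \<in> A - B" for x using tau bij_betwE by blast
  have "inj \<sigma>"
  proof (rule injI)
    fix x y assume e: "\<sigma> x = \<sigma> y"
    show "x = y"
    proof (cases "x \<in> A")
      case xA: True
      show ?thesis
      proof (cases "y \<in> A")
        case True then show ?thesis using xA e inj \<sigma>_def by (auto dest: inj_onD)
      next
        case False then show ?thesis using xA e \<sigma>_def hB[OF xA] tA[of y] by (auto split: if_splits)
      qed
    next
      case xA: False
      show ?thesis
      proof (cases "y \<in> A")
        case True then show ?thesis using xA e \<sigma>_def hB[OF True] tA[of x] by (auto split: if_splits)
      next
        case yA: False
        show ?thesis
        proof (cases "x \<in> B")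
          case True
          then show ?thesis using xA yA e \<sigma>_def tA[of x] tA[of y] tau
            by (auto split: if_splits simp: bij_betw_def dest: inj_onD)
        next
          case False
          then show ?thesis using xA yA e \<sigma>_def tA[of y] by (auto split: if_splits)
        qed
      qed
    qed
  qed
  moreover have "surj \<sigma>"
  proof -
    have "y \<in> range \<sigma>" for y
    proof (cases "y \<in> B")
      case True
      then obtain x where "x \<in> A" "y = h x" using B_def by auto
      then show ?thesis using \<sigma>_def by (metis rangeI)
    next
      case nB: False
      show ?thesis
      proof (cases "y \<in> A")
        case True
        then have "y \<in> \<tau> ` (B - A)" using tau nB by (simp add: bij_betw_def)
        then obtain x where "x \<in> B - A" "y = \<tau> x" by auto
        then show ?thesis using \<sigma>_def by (metis DiffD1 DiffD2 rangeI)
      next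
        case False then show ?thesis using nB \<sigma>_def by (metis rangeI)
      qed
    qed
    then show ?thesis by auto
  qed
  ultimately show ?thesis using \<sigma>_def by (auto simp: bij_def)
qed

lemma grp_facts:
  assumes "comm_group (grp H)"
  shows "H (H (a, b), c) = H (a, H (b, c))" "H (0, a) = a" "H (a, b) = H (b, a)"
proof -
  interpret comm_group "grp H" by fact
  show "H (H (a, b), c) = H (a, H (b, c))" using m_assoc[of a b c] by (simp add: grp_def)
  show "H (0, a) = a" using l_one[of a] by (simp add: grp_def)
  show "H (a, b) = H (b, a)" using m_comm[of a b] by (simp add: grp_def)
qed

lemma key:
  assumes P: "group_property P" and GS: "G \<in> TF"
    and HP: "H \<in> P" and emb: "embeds (grp G) (grp H)" and finF: "finite F"
  shows "\<exists>H'\<in>P. \<forall>p\<in>F. H' p = G p"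
proof -
  have HT: "H \<in> TF" using P HP by (auto simp: group_property_def)
  have cH: "comm_group (grp H)" and tfH: "torsion_free (grp H)" using HT by (auto simp: TF_def AbGrp_def)
  have cG: "comm_group (grp G)" using GS by (auto simp: TF_def AbGrp_def)
  obtain h where hh: "h \<in> hom (grp G) (grp H)" and hinj: "inj h"
    using emb by (auto simp: embeds_def grp_def)
  have hmul: "h (G (a, b)) = H (h a, h b)" for a b using hh by (auto simp: hom_def grp_def)
  have h0: "h 0 = 0" using hom_one[OF hh] cG cH by (simp add: grp_def comm_group_def)
  define A where "A = insert 0 (fst ` F \<union> snd ` F \<union> G ` F)"
  have finA: "finite A" using finF A_def by simp
  obtain \<sigma> where bs: "bij \<sigma>" and sA: "\<forall>x\<in>A. \<sigma> x = h x"
    using extend_perm[OF finA, of h] hinj by (meson inj_on_subset subset_UNIV)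
  define \<rho> where "\<rho> = inv_into UNIV \<sigma>"
  have rs: "\<rho> (\<sigma> x) = x" for x using bs \<rho>_def by (simp add: bij_def)
  have sr: "\<sigma> (\<rho> x) = x" for x using bs \<rho>_def by (simp add: bij_def surj_f_inv_f)
  have s0: "\<sigma> 0 = 0" using sA h0 A_def by auto
  define H' where "H' = (\<lambda>(x, y). \<rho> (H (\<sigma> x, \<sigma> y)))"
  have H'e: "H' (x, y) = \<rho> (H (\<sigma> x, \<sigma> y))" for x y by (simp add: H'_def)
  have shom: "\<sigma> \<in> hom (grp H') (grp H)" by (auto simp: hom_def grp_def H'e sr)
  have siso: "\<sigma> \<in> iso (grp H') (grp H)" using shom bs by (auto simp: iso_def grp_def bij_def bij_betw_def)
  have rhom: "\<rho> \<in> hom (grp H) (grp H')" by (auto simp: hom_def grp_def H'e rs sr)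
  have riso: "\<rho> \<in> iso (grp H) (grp H')"
  proof -
    have "bij \<rho>" using bs \<rho>_def by (simp add: bij_imp_bij_inv)
    then show ?thesis using rhom by (simp add: iso_def grp_def)
  qed
  have mon: "monoid (grp H')"
  proof (rule monoidI)
    fix x y z
    show "x \<otimes>\<^bsub>grp H'\<^esub> y \<otimes>\<^bsub>grp H'\<^esub> z = x \<otimes>\<^bsub>grp H'\<^esub> (y \<otimes>\<^bsub>grp H'\<^esub> z)"
      using grp_facts(1)[OF cH, of "\<sigma> x" "\<sigma> y" "\<sigma> z"] by (simp add: grp_def H'e sr)
    show "\<one>\<^bsub>grp H'\<^esub> \<otimes>\<^bsub>grp H'\<^esub> x = x" using grp_facts(2)[OF cH, of "\<sigma> x"] by (simp add: grp_def H'e s0 rs)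
    show "x \<otimes>\<^bsub>grp H'\<^esub> \<one>\<^bsub>grp H'\<^esub> = x"
      using grp_facts(2)[OF cH, of "\<sigma> x"] grp_facts(3)[OF cH, of "\<sigma> x" 0] by (simp add: grp_def H'e s0 rs)
  qed (auto simp: grp_def)
  have cH': "comm_group (grp H')"
    using comm_group.iso_imp_comm_group[OF cH _ mon] riso by (auto simp: is_iso_def)
  have gH: "group (grp H)" and gH': "group (grp H')" using cH cH' by (auto simp: comm_group_def)
  have tfH': "torsion_free (grp H')"
    unfolding torsion_free_def
  proof (intro ballI allI impI)
    fix x and n :: nat assume n: "n > 0" and e: "x [^]\<^bsub>grp H'\<^esub> n = \<one>\<^bsub>grp H'\<^esub>"
    have "\<sigma> (x [^]\<^bsub>grp H'\<^esub> n) = (\<sigma> x) [^]\<^bsub>grp H\<^esub> n"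
      using hom_nat_pow[OF shom _ gH' gH] by (simp add: grp_def)
    moreover have o1: "\<one>\<^bsub>grp H'\<^esub> = 0" and o2: "\<one>\<^bsub>grp H\<^esub> = 0"
      and c2: "carrier (grp H) = UNIV" by (simp_all add: grp_def)
    ultimately have "(\<sigma> x) [^]\<^bsub>grp H\<^esub> n = \<one>\<^bsub>grp H\<^esub>" using e s0 by metis
    then have "\<sigma> x = \<one>\<^bsub>grp H\<^esub>" using tfH n c2 unfolding torsion_free_def by blast
    then show "x = \<one>\<^bsub>grp H'\<^esub>" using rs[of x] rs[of 0] s0 o1 o2 by metis
  qed
  have H'T: "H' \<in> TF" using cH' tfH' by (simp add: TF_def AbGrp_def)
  have "grp H' \<cong> grp H" using siso by (auto simp: is_iso_def)
  then have H'P: "H' \<in> P" using P H'T HP by (auto simp: group_property_def)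
  have "H' p = G p" if "p \<in> F" for p
  proof -
    obtain a b where p: "p = (a, b)" by force
    have abF: "(a, b) \<in> F" using that p by simp
    have aA: "a \<in> A" using abF unfolding A_def by (metis UnI1 fst_conv image_eqI insertI2)
    have bA: "b \<in> A" using abF unfolding A_def by (metis UnI1 UnI2 snd_conv image_eqI insertI2)
    have gA: "G (a, b) \<in> A" using abF unfolding A_def by blast
    have "H' p = \<rho> (H (\<sigma> a, \<sigma> b))" using p H'e by simp
    also have "\<dots> = \<rho> (H (h a, h b))" using sA aA bA by simp
    also have "\<dots> = \<rho> (h (G (a, b)))" by (simp only: hmul)
    also have "\<dots> = \<rho> (\<sigma> (G (a, b)))" using sA gA by simp
    finally show ?thesis using rs p by simp
  qed
  then show ?thesis using H'P by blast
qed

theorem lemma2p8: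
  fixes P S :: "(nat \<times> nat \<Rightarrow> nat) set"
  assumes "group_property P" and "group_property S" and "P \<subseteq> S"
    and "\<forall>G\<in>S. \<exists>H\<in>P. embeds (grp G) (grp H)"
  shows "S \<subseteq> closure P"
proof
  fix G assume GS: "G \<in> S"
  have GT: "G \<in> TF" using assms(2) GS by (auto simp: group_property_def)
  obtain H where HP: "H \<in> P" and emb: "embeds (grp G) (grp H)" using assms(4) GS by blast
  show "G \<in> closure P"
    unfolding closure_iff_nhds_not_empty
  proof (intro allI impI)
    fix U V assume UV: "V \<subseteq> U" and oV: "open V" and GV: "G \<in> V"
    obtain X where X: "G \<in> (\<Pi>\<^sub>E i\<in>UNIV. X i)" "finite {i. X i \<noteq> topspace euclidean}"
      "(\<Pi>\<^sub>E i\<in>UNIV. X i) \<subseteq> V"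
      using product_topology_open_contains_basis[OF oV[unfolded open_fun_def] GV] by blast
    obtain H' where H'P: "H' \<in> P" and agree: "\<forall>p\<in>{i. X i \<noteq> UNIV}. H' p = G p"
      using key[OF assms(1) GT HP emb, of "{i. X i \<noteq> UNIV}"] X(2) by auto
    have "H' \<in> (\<Pi>\<^sub>E i\<in>UNIV. X i)"
    proof -
      have "H' i \<in> X i" for i
      proof (cases "X i = UNIV")
        case False
        then have "H' i = G i" using agree by blast
        moreover have "G i \<in> X i" using X(1) by (cases i) (auto simp: PiE_def Pi_def)
        ultimately show ?thesis by simp
      qed simp
      then show ?thesis by (auto simp: PiE_def)
    qed
    then show "P \<inter> U \<noteq> {}" using X(3) UV H'P by blast
  qed
qed

end
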